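(* Let $\mathbb{F}$ be a field, $n \ge 1$ an integer, and $I$ a non-trivial ideal of $\mathbb{F}[X_1,\ldots,X_n]$ such that the quotient space $\mathbb{F}[X_1,\ldots,X_n]/I$ has finite dimension $K$ over $\mathbb{F}$. Let $G(I)$ be the reduced Gröbner basis of $I$ with respect to the graded lexicographic order. Then $$|G(I)| \le (n-1)K + 1,$$ and equality holds if and only if $K = 1$ or $n = 1$.
   Context: The graded lexicographic order compares monomials first by total degree and then lexicographically (with $X_1 > X_2 > \cdots > X_n$). A Gröbner basis of a non-zero ideal $I$ with respect to a monomial order is a finite generating set $G$ of $I$ such that the leading monomial of every $f \in I$ is divisible by the leading monomial of some element of $G$; it is reduced if each element is monic and no leading monomial of an element divides any non-zero term of another element. Each non-zero ideal has a unique reduced Gröbner basis for a given monomial order. *)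

theory Defs
  imports "HOL-Library.Poly_Mapping"
begin

text \<open>Multivariate polynomials over a field: maps from exponent vectors
(exponent vectors, variable X_(i+1) has index i) to coefficients.\<close>

type_synonym 'a mpoly = "(nat \<Rightarrow>\<^sub>0 nat) \<Rightarrow>\<^sub>0 'a"

definition polys :: "nat \<Rightarrow> 'a::field mpoly set" where
  "polys n = {p::'a mpoly. \<forall>m \<in> Poly_Mapping.keys p. Poly_Mapping.keys m \<subseteq> {..<n}}"

definition is_poly_ideal :: "nat \<Rightarrow> 'a::field mpoly set \<Rightarrow> bool" where
  "is_poly_ideal n I \<longleftrightarrow> I \<subseteq> polys n \<and> 0 \<in> I \<and>
     (\<forall>p\<in>I. \<forall>q\<in>I. p + q \<in> I) \<and>
     (\<forall>p\<in>I. \<forall>r\<in>polys n. r * p \<in> I)"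

definition smult_mp :: "'a::field \<Rightarrow> 'a mpoly \<Rightarrow> 'a mpoly" where
  "smult_mp c p = Poly_Mapping.single 0 c * p"

definition quot_basis :: "nat \<Rightarrow> 'a::field mpoly set \<Rightarrow> 'a mpoly list \<Rightarrow> bool" where
  "quot_basis n I bs \<longleftrightarrow> set bs \<subseteq> polys n \<and>
     (\<forall>p\<in>polys n. \<exists>c. p - (\<Sum>i<length bs. smult_mp (c i) (bs ! i)) \<in> I) \<and>
     (\<forall>c. (\<Sum>i<length bs. smult_mp (c i) (bs ! i)) \<in> I \<longrightarrow> (\<forall>i<length bs. c i = 0))"

definition quot_dim :: "nat \<Rightarrow> 'a::field mpoly set \<Rightarrow> nat \<Rightarrow> bool" where
  "quot_dim n I K \<longleftrightarrow> (\<exists>bs. length bs = K \<and> quot_basis n I bs)"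

definition mdeg :: "(nat \<Rightarrow>\<^sub>0 nat) \<Rightarrow> nat" where
  "mdeg m = (\<Sum>i\<in>Poly_Mapping.keys m. Poly_Mapping.lookup m i)"

text \<open>Strict graded lexicographic order with X_1 > X_2 > ... (index 0 largest).\<close>
definition deglex_less :: "(nat \<Rightarrow>\<^sub>0 nat) \<Rightarrow> (nat \<Rightarrow>\<^sub>0 nat) \<Rightarrow> bool" where
  "deglex_less m1 m2 \<longleftrightarrow> mdeg m1 < mdeg m2 \<or>
     (mdeg m1 = mdeg m2 \<and>
       (\<exists>i. Poly_Mapping.lookup m1 i < Poly_Mapping.lookup m2 i \<and> (\<forall>j<i. Poly_Mapping.lookup m1 j = Poly_Mapping.lookup m2 j)))"

definition lead_mon :: "'a::field mpoly \<Rightarrow> (nat \<Rightarrow>\<^sub>0 nat)" where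
  "lead_mon p = (THE m. m \<in> Poly_Mapping.keys p \<and> (\<forall>m'\<in>Poly_Mapping.keys p. m' \<noteq> m \<longrightarrow> deglex_less m' m))"

definition lead_coef :: "'a::field mpoly \<Rightarrow> 'a" where
  "lead_coef p = Poly_Mapping.lookup p (lead_mon p)"

definition mon_dvd :: "(nat \<Rightarrow>\<^sub>0 nat) \<Rightarrow> (nat \<Rightarrow>\<^sub>0 nat) \<Rightarrow> bool" where
  "mon_dvd m1 m2 \<longleftrightarrow> (\<forall>i. Poly_Mapping.lookup m1 i \<le> Poly_Mapping.lookup m2 i)"

definition groebner_basis :: "nat \<Rightarrow> 'a::field mpoly set \<Rightarrow> 'a mpoly set \<Rightarrow> bool" where
  "groebner_basis n I G \<longleftrightarrow> finite G \<and> G \<subseteq> I \<and>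
     (\<forall>f\<in>I. \<exists>q. (\<forall>g\<in>G. q g \<in> polys n) \<and> f = (\<Sum>g\<in>G. q g * g)) \<and>
     (\<forall>f\<in>I. f \<noteq> 0 \<longrightarrow> (\<exists>g\<in>G. g \<noteq> 0 \<and> mon_dvd (lead_mon g) (lead_mon f)))"

definition reduced_groebner_basis :: "nat \<Rightarrow> 'a::field mpoly set \<Rightarrow> 'a mpoly set \<Rightarrow> bool" where
  "reduced_groebner_basis n I G \<longleftrightarrow> groebner_basis n I G \<and>
     (\<forall>g\<in>G. g \<noteq> 0 \<and> lead_coef g = 1) \<and>
     (\<forall>g\<in>G. \<forall>g'\<in>G. g \<noteq> g' \<longrightarrow> (\<forall>m\<in>Poly_Mapping.keys g'. \<not> mon_dvd (lead_mon g) m))"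

end

theory Submission
  imports Defs
begin


lemma mdeg_0_iff: "mdeg m = 0 \<longleftrightarrow> m = 0"
proof
  assume "mdeg m = 0"
  then have "\<forall>i\<in>Poly_Mapping.keys m. Poly_Mapping.lookup m i = 0" unfolding mdeg_def by (simp add: sum_eq_0_iff)
  then have "Poly_Mapping.keys m = {}" by (auto simp: in_keys_iff simp del: keys_eq_empty)
  then show "m = 0" by (metis keys_eq_empty)
qed (simp add: mdeg_def)

lemma deglex_irrefl: "\<not> deglex_less m m"
  by (auto simp: deglex_less_def)

lemma deglex_trans:
  assumes ab: "deglex_less a b" and bc: "deglex_less b c" shows "deglex_less a c"
proof -
  have lex: "\<exists>i. Poly_Mapping.lookup a i < Poly_Mapping.lookup c i \<and> (\<forall>j<i. Poly_Mapping.lookup a j = Poly_Mapping.lookup c j)"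
    if "Poly_Mapping.lookup a i1 < Poly_Mapping.lookup b i1" "\<forall>j<i1. Poly_Mapping.lookup a j = Poly_Mapping.lookup b j"
       "Poly_Mapping.lookup b i2 < Poly_Mapping.lookup c i2" "\<forall>j<i2. Poly_Mapping.lookup b j = Poly_Mapping.lookup c j" for i1 i2 :: nat
  proof (cases i1 i2 rule: linorder_cases)
    case less then show ?thesis using that by (intro exI[of _ i1]) auto
  next
    case equal then show ?thesis using that by (intro exI[of _ i1]) auto
  next
    case greater then show ?thesis using that by (intro exI[of _ i2]) auto
  qed
  have d1: "mdeg a \<le> mdeg b" using ab unfolding deglex_less_def by auto
  have d2: "mdeg b \<le> mdeg c" using bc unfolding deglex_less_def by auto
  show ?thesis
  proof (cases "mdeg a < mdeg c")
    case True then show ?thesis unfolding deglex_less_def by simp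
  next
    case False
    then have e1: "mdeg a = mdeg b" "mdeg b = mdeg c" using d1 d2 by auto
    from ab e1 obtain i1 where i1: "Poly_Mapping.lookup a i1 < Poly_Mapping.lookup b i1" "\<forall>j<i1. Poly_Mapping.lookup a j = Poly_Mapping.lookup b j"
      unfolding deglex_less_def by auto
    from bc e1 obtain i2 where i2: "Poly_Mapping.lookup b i2 < Poly_Mapping.lookup c i2" "\<forall>j<i2. Poly_Mapping.lookup b j = Poly_Mapping.lookup c j"
      unfolding deglex_less_def by auto
    from lex[OF i1 i2] e1 show ?thesis unfolding deglex_less_def by simp
  qed
qed

lemma deglex_total:
  assumes "m1 \<noteq> m2" shows "deglex_less m1 m2 \<or> deglex_less m2 m1"
proof (cases "mdeg m1 = mdeg m2")
  case True
  have "\<exists>i. Poly_Mapping.lookup m1 i \<noteq> Poly_Mapping.lookup m2 i"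
  proof (rule ccontr)
    assume "\<not> (\<exists>i. Poly_Mapping.lookup m1 i \<noteq> Poly_Mapping.lookup m2 i)"
    then have "m1 = m2" by (intro poly_mapping_eqI) simp
    then show False using assms by simp
  qed
  define i where "i = (LEAST i. Poly_Mapping.lookup m1 i \<noteq> Poly_Mapping.lookup m2 i)"
  have ne: "Poly_Mapping.lookup m1 i \<noteq> Poly_Mapping.lookup m2 i" unfolding i_def
    using LeastI_ex[OF \<open>\<exists>i. _\<close>] .
  have eq: "\<forall>j<i. Poly_Mapping.lookup m1 j = Poly_Mapping.lookup m2 j"
  proof (intro allI impI)
    fix j assume "j < i"
    then show "Poly_Mapping.lookup m1 j = Poly_Mapping.lookup m2 j"
      using not_less_Least[of j "\<lambda>i. Poly_Mapping.lookup m1 i \<noteq> Poly_Mapping.lookup m2 i"] unfolding i_def by blast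
  qed
  have eq2: "\<forall>j<i. Poly_Mapping.lookup m2 j = Poly_Mapping.lookup m1 j" using eq by simp
  from ne have "Poly_Mapping.lookup m1 i < Poly_Mapping.lookup m2 i \<or> Poly_Mapping.lookup m2 i < Poly_Mapping.lookup m1 i" by arith
  then show ?thesis
  proof
    assume "Poly_Mapping.lookup m1 i < Poly_Mapping.lookup m2 i"
    then have "deglex_less m1 m2" using eq True unfolding deglex_less_def by blast
    then show ?thesis ..
  next
    assume "Poly_Mapping.lookup m2 i < Poly_Mapping.lookup m1 i"
    then have "deglex_less m2 m1" using eq2 True unfolding deglex_less_def by auto
    then show ?thesis ..
  qed
next
  case False then show ?thesis unfolding deglex_less_def by auto
qed

lemma deglex_max_exists:
  "finite A \<Longrightarrow> A \<noteq> {} \<Longrightarrow> \<exists>m\<in>A. \<forall>m'\<in>A. m' \<noteq> m \<longrightarrow> deglex_less m' m"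
proof (induction A rule: finite_ne_induct)
  case (singleton x) then show ?case by auto
next
  case (insert x F)
  then obtain m where m: "m \<in> F" "\<forall>m'\<in>F. m' \<noteq> m \<longrightarrow> deglex_less m' m" by blast
  show ?case
  proof (cases "deglex_less x m")
    case True then show ?thesis using m by (intro bexI[of _ m]) auto
  next
    case False
    then have "deglex_less m x" using deglex_total[of x m] insert.hyps m(1) by auto
    show ?thesis
    proof (intro bexI[of _ x] ballI impI)
      fix m' assume "m' \<in> insert x F" "m' \<noteq> x"
      then have "m' \<in> F" by auto
      then show "deglex_less m' x" using m \<open>deglex_less m x\<close> deglex_trans by metis
    qed simp
  qed
qed

lemma lead_mon_prop:
  assumes "p \<noteq> 0"
  shows "lead_mon p \<in> Poly_Mapping.keys p \<and> (\<forall>m'\<in>Poly_Mapping.keys p. m' \<noteq> lead_mon p \<longrightarrow> deglex_less m' (lead_mon p))"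
proof -
  have ex: "\<exists>!m. m \<in> Poly_Mapping.keys p \<and> (\<forall>m'\<in>Poly_Mapping.keys p. m' \<noteq> m \<longrightarrow> deglex_less m' m)"
  proof (rule ex_ex1I)
    show "\<exists>m. m \<in> Poly_Mapping.keys p \<and> (\<forall>m'\<in>Poly_Mapping.keys p. m' \<noteq> m \<longrightarrow> deglex_less m' m)"
      using deglex_max_exists[of "Poly_Mapping.keys p"] assms by auto
  next
    fix m1 m2 assume "m1 \<in> Poly_Mapping.keys p \<and> (\<forall>m'\<in>Poly_Mapping.keys p. m' \<noteq> m1 \<longrightarrow> deglex_less m' m1)"
      "m2 \<in> Poly_Mapping.keys p \<and> (\<forall>m'\<in>Poly_Mapping.keys p. m' \<noteq> m2 \<longrightarrow> deglex_less m' m2)"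
    then show "m1 = m2" using deglex_trans deglex_irrefl by metis
  qed
  show ?thesis unfolding lead_mon_def using theI'[OF ex] .
qed


lemma exists_dep:
  fixes v :: "'j \<Rightarrow> nat \<Rightarrow> 'a::field"
  assumes "finite J" "K < card J"
  shows "\<exists>a. (\<exists>j\<in>J. a j \<noteq> 0) \<and> (\<forall>i<K. (\<Sum>j\<in>J. a j * v j i) = 0)"
  using assms
proof (induction K arbitrary: J v)
  case 0
  then obtain j where "j \<in> J" by (metis card.empty ex_in_conv less_irrefl)
  then show ?case by (intro exI[of _ "\<lambda>_. 1"]) auto
next
  case (Suc K)
  show ?case
  proof (cases "\<forall>j\<in>J. v j K = 0")
    case True
    from Suc.IH[of J v] Suc.prems obtain a where a: "\<exists>j\<in>J. a j \<noteq> 0"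
      "\<forall>i<K. (\<Sum>j\<in>J. a j * v j i) = 0" by auto
    have "\<forall>i<Suc K. (\<Sum>j\<in>J. a j * v j i) = 0"
    proof (intro allI impI)
      fix i assume "i < Suc K"
      then consider "i < K" | "i = K" by linarith
      then show "(\<Sum>j\<in>J. a j * v j i) = 0" using a True by cases auto
    qed
    then show ?thesis using a by blast
  next
    case False
    then obtain p where p: "p \<in> J" "v p K \<noteq> 0" by blast
    define J' where "J' = J - {p}"
    define w where "w j i = v j i - (v j K / v p K) * v p i" for j i
    have fJ': "finite J'" using Suc.prems unfolding J'_def by auto
    have "K < card J'" using Suc.prems p unfolding J'_def by (simp add: card_Diff_singleton)
    from Suc.IH[OF fJ' this, of w] obtain b where b: "\<exists>j\<in>J'. b j \<noteq> 0"
      "\<forall>i<K. (\<Sum>j\<in>J'. b j * w j i) = 0" by auto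
    define a where "a j = (if j = p then - (\<Sum>j\<in>J'. b j * v j K) / v p K else b j)" for j
    have split: "(\<Sum>j\<in>J. a j * v j i) = a p * v p i + (\<Sum>j\<in>J'. b j * v j i)" for i
    proof -
      have "(\<Sum>j\<in>J. a j * v j i) = a p * v p i + (\<Sum>j\<in>J'. a j * v j i)"
        unfolding J'_def using Suc.prems(1) p(1) by (simp add: sum.remove)
      also have "(\<Sum>j\<in>J'. a j * v j i) = (\<Sum>j\<in>J'. b j * v j i)"
        unfolding J'_def a_def by (intro sum.cong) auto
      finally show ?thesis .
    qed
    have "\<forall>i<Suc K. (\<Sum>j\<in>J. a j * v j i) = 0"
    proof (intro allI impI)
      fix i assume "i < Suc K"
      then consider "i < K" | "i = K" by linarith
      then show "(\<Sum>j\<in>J. a j * v j i) = 0"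
      proof cases
        case 1
        have "(\<Sum>j\<in>J'. b j * w j i) = (\<Sum>j\<in>J'. b j * v j i) - (\<Sum>j\<in>J'. b j * v j K) / v p K * v p i"
          unfolding w_def by (simp add: algebra_simps sum_subtractf sum_distrib_left sum_distrib_right sum_divide_distrib)
        then show ?thesis using b(2) 1 split[of i] p(2) unfolding a_def by auto
      next
        case 2 then show ?thesis using split[of i] p(2) unfolding a_def by auto
      qed
    qed
    moreover have "\<exists>j\<in>J. a j \<noteq> 0" using b(1) unfolding a_def J'_def by auto
    ultimately show ?thesis by blast
  qed
qed



abbreviation lk :: "('a \<Rightarrow>\<^sub>0 'b::zero) \<Rightarrow> 'a \<Rightarrow> 'b" where "lk \<equiv> Poly_Mapping.lookup"
abbreviation ks :: "('a \<Rightarrow>\<^sub>0 'b::zero) \<Rightarrow> 'a set" where "ks \<equiv> Poly_Mapping.keys"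

definition ee :: "nat \<Rightarrow> (nat \<Rightarrow>\<^sub>0 nat)" where "ee i = Poly_Mapping.single i 1"

lemma lk_ee: "lk (ee i) j = (if i = j then 1 else 0)"
  by (simp add: ee_def lookup_single when_def)

lemma ks_ee[simp]: "ks (ee i) = {i}"
  by (simp add: ee_def)

lemma readd: "i \<in> ks m \<Longrightarrow> m - ee i + ee i = m"
  by (rule poly_mapping_eqI) (auto simp: lookup_add lookup_minus lk_ee in_keys_iff)

lemma dvd_sub: "mon_dvd (m - ee i) m"
  by (simp add: mon_dvd_def lookup_minus)

lemma mon_dvd_ee: "i \<in> ks m \<Longrightarrow> mon_dvd (ee i) m"
  by (auto simp: mon_dvd_def lk_ee in_keys_iff)

definition cm :: "(nat \<Rightarrow>\<^sub>0 nat) \<Rightarrow> nat" where "cm m = Min (ks m)"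

lemma cm_in: "m \<noteq> 0 \<Longrightarrow> cm m \<in> ks m"
  unfolding cm_def by (rule Min_in) auto

definition fm :: "(nat \<Rightarrow>\<^sub>0 nat) \<Rightarrow> (nat \<Rightarrow>\<^sub>0 nat) \<times> nat" where
  "fm m = (m - ee (cm m), cm m)"

lemma fm_inj: "m \<noteq> 0 \<Longrightarrow> m' \<noteq> 0 \<Longrightarrow> fm m = fm m' \<Longrightarrow> m = m'"
  unfolding fm_def by (metis Pair_inject cm_in readd)

lemma comb:
  fixes S L :: "(nat \<Rightarrow>\<^sub>0 nat) set"
  assumes finS: "finite S" and S0: "0 \<in> S" and Smons: "\<forall>s\<in>S. ks s \<subseteq> {..<n}"
   and down: "\<forall>s\<in>S. \<forall>t. mon_dvd t s \<longrightarrow> t \<in> S"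
   and finL: "finite L" and Lmons: "\<forall>m\<in>L. ks m \<subseteq> {..<n}"
   and Lout: "\<forall>m\<in>L. m \<notin> S" and Lmin: "\<forall>m\<in>L. \<forall>i\<in>ks m. m - ee i \<in> S"
  shows "card L + card S \<le> n * card S + 1 \<and> (n \<ge> 2 \<and> card S \<ge> 2 \<longrightarrow> card L + card S \<le> n * card S)"
proof -
  define B where "B = {(s,i). s \<in> S \<and> i < n \<and> s + ee i \<notin> S}"
  define P where "P = {(s,i). s \<in> S \<and> i < n \<and> s + ee i \<in> S}"
  have finSV: "finite (S \<times> {..<n})" using finS by simp
  have BP: "B \<union> P = S \<times> {..<n}" "B \<inter> P = {}" unfolding B_def P_def by auto
  have finB: "finite B" using finSV BP(1) finite_subset[of B "S \<times> {..<n}"] by blast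
  have finP: "finite P" using finSV BP(1) finite_subset[of P "S \<times> {..<n}"] by blast
  have cardBP: "card B + card P = n * card S"
    using card_Un_disjoint[OF finB finP BP(2)] BP(1) card_cartesian_product[of S "{..<n}"]
    by (simp add: mult.commute)
  have L0: "0 \<notin> L" using Lout S0 by auto
  have fL: "fm ` L \<subseteq> B"
  proof
    fix x assume "x \<in> fm ` L"
    then obtain m where m: "m \<in> L" "x = fm m" by auto
    have "m \<noteq> 0" using m L0 by auto
    then have c: "cm m \<in> ks m" by (rule cm_in)
    have "m - ee (cm m) \<in> S" using Lmin m(1) c by blast
    moreover have "cm m < n" using c Lmons m(1) by auto
    moreover have "m - ee (cm m) + ee (cm m) \<notin> S" using readd[OF c] Lout m(1) by simp
    ultimately show "x \<in> B" unfolding B_def m(2) fm_def by simp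
  qed
  have injL: "inj_on fm L"
  proof (rule inj_onI)
    fix x y assume "x \<in> L" "y \<in> L" "fm x = fm y"
    then show "x = y" using fm_inj[of x y] L0 by auto
  qed
  have cLB: "card L \<le> card B" using card_inj_on_le[OF injL fL finB] .
  have fS: "fm ` (S - {0}) \<subseteq> P"
  proof
    fix x assume "x \<in> fm ` (S - {0})"
    then obtain m where m: "m \<in> S" "m \<noteq> 0" "x = fm m" by auto
    then have c: "cm m \<in> ks m" by (intro cm_in)
    have "m - ee (cm m) \<in> S" using down m(1) dvd_sub by blast
    moreover have "cm m < n" using c Smons m(1) by auto
    moreover have "m - ee (cm m) + ee (cm m) \<in> S" using readd[OF c] m(1) by simp
    ultimately show "x \<in> P" unfolding P_def m(3) fm_def by simp
  qed
  have injS: "inj_on fm (S - {0})"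
  proof (rule inj_onI)
    fix x y assume "x \<in> S - {0}" "y \<in> S - {0}" "fm x = fm y"
    then show "x = y" using fm_inj[of x y] by auto
  qed
  have cSP: "card (S - {0}) \<le> card P" using card_inj_on_le[OF injS fS finP] .
  have cS0: "card (S - {0}) = card S - 1" using S0 finS by simp
  have cS1: "card S \<ge> 1" using card_gt_0_iff[of S] S0 finS by auto
  have part1: "card L + card S \<le> n * card S + 1" using cLB cSP cS0 cS1 cardBP by linarith
  have part2: "card L + card S \<le> n * card S" if n2: "n \<ge> 2" and s2: "card S \<ge> 2"
  proof -
    have "card L < card B \<or> card S \<le> card P"
    proof (cases "\<exists>t\<in>S. \<exists>j\<in>ks t. j \<noteq> cm t")
      case True
      then obtain t j where t: "t \<in> S" "j \<in> ks t" "j \<noteq> cm t" by blast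
      have t0: "t \<noteq> 0" using t(2) by auto
      have inP: "(t - ee j, j) \<in> P"
      proof -
        have "t - ee j \<in> S" using down t(1) dvd_sub by blast
        moreover have "j < n" using t Smons by auto
        moreover have "t - ee j + ee j \<in> S" using readd[OF t(2)] t(1) by simp
        ultimately show ?thesis unfolding P_def by simp
      qed
      have notin: "(t - ee j, j) \<notin> fm ` (S - {0})"
      proof
        assume "(t - ee j, j) \<in> fm ` (S - {0})"
        then obtain t' where t'a: "t' \<in> S - {0}" "fm t' = (t - ee j, j)" by (metis imageE)
        then have t': "t' \<in> S" "t' \<noteq> 0" "fm t' = (t - ee j, j)" by auto
        then have cj: "cm t' = j" and sub: "t' - ee j = t - ee j" unfolding fm_def by auto
        have "t' = t' - ee j + ee j" using readd[OF cm_in[OF t'(2)]] cj by simp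
        also have "\<dots> = t - ee j + ee j" using sub by simp
        also have "\<dots> = t" using readd[OF t(2)] .
        finally have "t' = t" .
        then show False using cj t(3) by simp
      qed
      have "fm ` (S - {0}) \<subset> P" using fS inP notin by blast
      then have "card (fm ` (S - {0})) < card P" using finP by (simp add: psubset_card_mono)
      then have "card (S - {0}) < card P" using card_image[OF injS] by simp
      then show ?thesis using cS0 cS1 by linarith
    next
      case False
      then have one: "\<forall>t\<in>S. \<forall>j\<in>ks t. j = cm t" by blast
      have "card (S - {0}) \<ge> 1" using cS0 s2 by linarith
      then have "S - {0} \<noteq> {}" by (metis card.empty not_one_le_zero)
      then obtain t where t: "t \<in> S" "t \<noteq> 0" by blast
      define j where "j = cm t"
      have jt: "j \<in> ks t" unfolding j_def using cm_in[OF t(2)] .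
      have ejS: "ee j \<in> S" using down t(1) mon_dvd_ee[OF jt] by blast
      have jn: "j < n" using jt t(1) Smons by auto
      define k where "k = (if j = 0 then 1 else (0::nat))"
      have k: "k < n" "k \<noteq> j" using n2 unfolding k_def by auto
      have ks2: "ks (ee j + ee k) = {j, k}"
        using k(2) by (auto simp: in_keys_iff lookup_add lk_ee split: if_splits)
      have s2notin: "ee j + ee k \<notin> S"
      proof
        assume "ee j + ee k \<in> S"
        then have "j = cm (ee j + ee k)" "k = cm (ee j + ee k)" using one ks2 by auto
        then show False using k(2) by simp
      qed
      have B1: "(ee j, k) \<in> B" unfolding B_def using ejS k(1) s2notin by simp
      have "\<exists>x\<in>B. x \<notin> fm ` L"
      proof (cases "(ee j, k) \<in> fm ` L")
        case False then show ?thesis using B1 by blast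
      next
        case True
        then obtain m where m: "m \<in> L" "fm m = (ee j, k)" by auto
        have m0: "m \<noteq> 0" using m(1) L0 by auto
        have cmk: "cm m = k" and msub: "m - ee k = ee j" using m(2) unfolding fm_def by auto
        have meq: "m = ee j + ee k" using readd[OF cm_in[OF m0]] cmk msub by simp
        have "j \<in> ks m" using meq ks2 by simp
        then have "m - ee j \<in> S" using Lmin m(1) by blast
        moreover have "m - ee j = ee k" unfolding meq
          by (rule poly_mapping_eqI) (auto simp: lookup_add lookup_minus lk_ee)
        ultimately have ekS: "ee k \<in> S" by simp
        have B2: "(ee k, j) \<in> B" unfolding B_def using ekS jn s2notin by (simp add: add.commute)
        have "(ee k, j) \<notin> fm ` L"
        proof
          assume "(ee k, j) \<in> fm ` L"
          then obtain m' where m': "m' \<in> L" "fm m' = (ee k, j)" by auto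
          have m'0: "m' \<noteq> 0" using m'(1) L0 by auto
          have cm'j: "cm m' = j" and m'sub: "m' - ee j = ee k" using m'(2) unfolding fm_def by auto
          have "m' = ee k + ee j" using readd[OF cm_in[OF m'0]] cm'j m'sub by simp
          then have "m' = m" using meq by (simp add: add.commute)
          then show False using cm'j cmk k(2) by simp
        qed
        then show ?thesis using B2 by blast
      qed
      then have "fm ` L \<subset> B" using fL by blast
      then have "card (fm ` L) < card B" using finB by (simp add: psubset_card_mono)
      then show ?thesis using card_image[OF injL] by simp
    qed
    then show ?thesis using cLB cSP cS0 cS1 cardBP by linarith
  qed
  show ?thesis using part1 part2 by blast
qed


lemma ideal_sum:
  assumes "is_poly_ideal n I" "finite A" "\<forall>x\<in>A. f x \<in> I"
  shows "sum f A \<in> I"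
  using assms(2,3)
proof (induction A rule: finite_induct)
  case empty then show ?case using assms(1) unfolding is_poly_ideal_def by simp
next
  case (insert x F) then show ?case using assms(1) unfolding is_poly_ideal_def by simp
qed

lemma const_polys: "(Poly_Mapping.single 0 c :: 'a::field mpoly) \<in> polys n"
  unfolding polys_def by auto

lemma single_sum: "Poly_Mapping.single k (sum f A) = (\<Sum>x\<in>A. Poly_Mapping.single k (f x))"
  by (induction A rule: infinite_finite_induct) (simp_all add: single_add)

lemma mon_dvd_refl: "mon_dvd m m" by (simp add: mon_dvd_def)

lemma mon_dvd_trans: "mon_dvd a b \<Longrightarrow> mon_dvd b c \<Longrightarrow> mon_dvd a c"
  unfolding mon_dvd_def using order_trans by blast

lemma mon_dvd_keys: "mon_dvd a b \<Longrightarrow> ks a \<subseteq> ks b"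
  unfolding mon_dvd_def by (auto simp: in_keys_iff) (metis less_le_trans)

lemma mon_dvd_0: "mon_dvd l 0 \<Longrightarrow> l = 0"
  unfolding mon_dvd_def by (intro poly_mapping_eqI) simp

theorem mainTheorem2:
  fixes I G :: "'a::field mpoly set" and n K :: nat
  assumes "n \<ge> 1"
    and "is_poly_ideal n I" and "I \<noteq> {0}" and "I \<noteq> polys n"
    and "quot_dim n I K"
    and "reduced_groebner_basis n I G"
  shows "card G \<le> (n - 1) * K + 1 \<and> (card G = (n - 1) * K + 1 \<longleftrightarrow> K = 1 \<or> n = 1)"
proof -
  obtain bs where bs: "length bs = K" "quot_basis n I bs" using assms(5) unfolding quot_dim_def by blast
  have span: "\<forall>p\<in>polys n. \<exists>c. p - (\<Sum>i<K. smult_mp (c i) (bs!i)) \<in> I"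
    using bs unfolding quot_basis_def by auto
  have gb: "groebner_basis n I G" and monic: "\<forall>g\<in>G. g \<noteq> 0 \<and> lead_coef g = 1"
    and red: "\<forall>g\<in>G. \<forall>g'\<in>G. g \<noteq> g' \<longrightarrow> (\<forall>m\<in>ks g'. \<not> mon_dvd (lead_mon g) m)"
    using assms(6) unfolding reduced_groebner_basis_def by auto
  have finG: "finite G" and GI: "G \<subseteq> I"
    and gbl: "\<forall>f\<in>I. f \<noteq> 0 \<longrightarrow> (\<exists>g\<in>G. g \<noteq> 0 \<and> mon_dvd (lead_mon g) (lead_mon f))"
    using gb unfolding groebner_basis_def by auto
  have Ipoly: "I \<subseteq> polys n" and I0: "0 \<in> I" and Imul: "\<forall>p\<in>I. \<forall>r\<in>polys n. r * p \<in> I"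
    using assms(2) unfolding is_poly_ideal_def by auto
  have lmk: "lead_mon g \<in> ks g" if "g \<in> G" for g using lead_mon_prop monic that by blast
  have lmn: "ks (lead_mon g) \<subseteq> {..<n}" if "g \<in> G" for g
    using that lmk[OF that] GI Ipoly unfolding polys_def by blast
  have anti: "g = g'" if "g \<in> G" "g' \<in> G" "mon_dvd (lead_mon g) (lead_mon g')" for g g'
    using red lmk that by blast
  have inj: "inj_on lead_mon G"
    by (rule inj_onI) (use anti mon_dvd_refl in metis)
  have lm0: "lead_mon g \<noteq> 0" if g: "g \<in> G" for g
  proof
    assume lg: "lead_mon g = 0"
    have kg: "ks g \<subseteq> {0}"
    proof
      fix m assume m: "m \<in> ks g"
      show "m \<in> {0}"
      proof (rule ccontr)
        assume "m \<notin> {0}"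
        then have "deglex_less m 0" using lead_mon_prop[of g] monic g m lg by auto
        then show False unfolding deglex_less_def using mdeg_0_iff[of m] mdeg_0_iff[of 0] \<open>m \<notin> {0}\<close> by auto
      qed
    qed
    have "g = Poly_Mapping.single 0 1"
    proof (rule poly_mapping_eqI)
      fix k
      show "lk g k = lk (Poly_Mapping.single 0 1) k"
      proof (cases "k = 0")
        case True
        then show ?thesis using monic g lg unfolding lead_coef_def by auto
      next
        case False
        then have "k \<notin> ks g" using kg by auto
        then show ?thesis using False by (simp add: in_keys_iff lookup_one when_def)
      qed
    qed
    then have g1: "g = 1" by simp
    have "polys n \<subseteq> I"
    proof
      fix p :: "'a mpoly" assume "p \<in> polys n"
      then have "p * g \<in> I" using Imul GI g by blast
      then show "p \<in> I" using g1 by simp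
    qed
    then show False using Ipoly assms(4) by blast
  qed
  define L where "L = lead_mon ` G"
  define S where "S = {s. ks s \<subseteq> {..<n} \<and> (\<forall>l\<in>L. \<not> mon_dvd l s)}"
  have antiL: "l = l'" if "l \<in> L" "l' \<in> L" "mon_dvd l l'" for l l'
    using that anti unfolding L_def by blast
  have S0: "0 \<in> S" unfolding S_def L_def using lm0 mon_dvd_0 by auto
  have Smons: "\<forall>s\<in>S. ks s \<subseteq> {..<n}" unfolding S_def by auto
  have down: "\<forall>s\<in>S. \<forall>t. mon_dvd t s \<longrightarrow> t \<in> S"
    unfolding S_def using mon_dvd_keys mon_dvd_trans by blast
  have finL: "finite L" unfolding L_def using finG by simp
  have Lmons: "\<forall>m\<in>L. ks m \<subseteq> {..<n}" unfolding L_def using lmn by blast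
  have Lout: "\<forall>m\<in>L. m \<notin> S" unfolding S_def using mon_dvd_refl by blast
  have Lmin: "\<forall>m\<in>L. \<forall>i\<in>ks m. m - ee i \<in> S"
  proof (intro ballI)
    fix m i assume m: "m \<in> L" and i: "i \<in> ks m"
    have "ks (m - ee i) \<subseteq> {..<n}" using mon_dvd_keys[OF dvd_sub] Lmons m by blast
    moreover have "\<not> mon_dvd l (m - ee i)" if l: "l \<in> L" for l
    proof
      assume d: "mon_dvd l (m - ee i)"
      then have "mon_dvd l m" using dvd_sub mon_dvd_trans by blast
      then have "l = m" using antiL l m by blast
      then have "lk m i \<le> lk m i - 1" using d unfolding mon_dvd_def by (simp add: lookup_minus lk_ee) (metis One_nat_def)
      then show False using i by (simp add: in_keys_iff)
    qed
    ultimately show "m - ee i \<in> S" unfolding S_def by blast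
  qed
  have indep: "card T \<le> K" if T: "T \<subseteq> S" "finite T" for T
  proof (rule ccontr)
    assume "\<not> card T \<le> K"
    then have KT: "K < card T" by simp
    define X where "X t = (Poly_Mapping.single t (1::'a) :: 'a mpoly)" for t
    have Xp: "X t \<in> polys n" if "t \<in> S" for t
      using that unfolding X_def S_def polys_def by auto
    define cf where "cf t = (SOME c. X t - (\<Sum>i<K. smult_mp (c i) (bs!i)) \<in> I)" for t
    have cf: "X t - (\<Sum>i<K. smult_mp (cf t i) (bs!i)) \<in> I" if "t \<in> T" for t
    proof -
      have "\<exists>c. X t - (\<Sum>i<K. smult_mp (c i) (bs!i)) \<in> I" using span Xp that T(1) by blast
      then show ?thesis unfolding cf_def by (rule someI_ex)
    qed
    obtain a where a: "\<exists>t\<in>T. a t \<noteq> 0" "\<forall>i<K. (\<Sum>t\<in>T. a t * cf t i) = 0"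
      using exists_dep[OF T(2) KT, of cf] by blast
    define F :: "'a mpoly" where "F = (\<Sum>t\<in>T. Poly_Mapping.single t (a t))"
    have inI: "(\<Sum>t\<in>T. smult_mp (a t) (X t - (\<Sum>i<K. smult_mp (cf t i) (bs!i)))) \<in> I"
    proof (rule ideal_sum[OF assms(2) T(2)], intro ballI)
      fix t assume "t \<in> T"
      then have "Poly_Mapping.single 0 (a t) * (X t - (\<Sum>i<K. smult_mp (cf t i) (bs!i))) \<in> I"
        using Imul cf[OF \<open>t \<in> T\<close>] const_polys[of "a t" n] by blast
      then show "smult_mp (a t) (X t - (\<Sum>i<K. smult_mp (cf t i) (bs!i))) \<in> I"
        unfolding smult_mp_def[of "a t"] .
    qed
    have trm: "smult_mp (a t) (X t - (\<Sum>i<K. smult_mp (cf t i) (bs!i)))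
       = Poly_Mapping.single t (a t) - (\<Sum>i<K. Poly_Mapping.single 0 (a t * cf t i) * bs!i)" for t
      unfolding smult_mp_def X_def
      by (simp add: right_diff_distrib sum_distrib_left mult.assoc[symmetric] mult_single)
    have "(\<Sum>t\<in>T. smult_mp (a t) (X t - (\<Sum>i<K. smult_mp (cf t i) (bs!i))))
       = F - (\<Sum>t\<in>T. \<Sum>i<K. Poly_Mapping.single 0 (a t * cf t i) * bs!i)"
      unfolding trm F_def by (simp add: sum_subtractf)
    also have "(\<Sum>t\<in>T. \<Sum>i<K. Poly_Mapping.single 0 (a t * cf t i) * bs!i)
       = (\<Sum>i<K. \<Sum>t\<in>T. Poly_Mapping.single 0 (a t * cf t i) * bs!i)"
      by (rule sum.swap)
    also have "\<dots> = (\<Sum>i<K. Poly_Mapping.single 0 (\<Sum>t\<in>T. a t * cf t i) * bs!i)"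
      by (simp add: single_sum sum_distrib_right)
    also have "\<dots> = 0" using a(2) by simp
    finally have FI: "F \<in> I" using inI by simp
    have lkF: "lk F m = (if m \<in> T then a m else 0)" for m
      unfolding F_def using T(2) by (simp add: lookup_sum lookup_single when_def)
    have F0: "F \<noteq> 0"
    proof
      assume "F = 0"
      then show False using a(1) lkF by (metis lookup_zero)
    qed
    have ksF: "ks F \<subseteq> T" by (auto simp: in_keys_iff lkF split: if_splits)
    obtain g where g: "g \<in> G" "mon_dvd (lead_mon g) (lead_mon F)" using gbl FI F0 by blast
    have "lead_mon F \<in> S" using lead_mon_prop[OF F0] ksF T(1) by blast
    then show False using g unfolding S_def L_def by blast
  qed
  have finS: "finite S"
  proof (rule ccontr)
    assume "infinite S"
    then obtain T where T: "finite T" "card T = Suc K" "T \<subseteq> S" using infinite_arbitrarily_large by blast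
    then show False using indep[OF T(3) T(1)] by simp
  qed
  have SK: "card S \<le> K" using indep finS by blast
  have cS1: "card S \<ge> 1" using card_gt_0_iff[of S] S0 finS by auto
  note cmb = comb[OF finS S0 Smons down finL Lmons Lout Lmin]
  have c1: "card L + card S \<le> n * card S + 1" using cmb by (rule conjunct1)
  have c2: "card L + card S \<le> n * card S" if "n \<ge> 2" "card S \<ge> 2"
    using cmb that by blast
  have cG: "card G = card L" unfolding L_def using card_image[OF inj] by simp
  obtain n' where n': "n = Suc n'" using assms(1) by (cases n) auto
  have nS: "n * x = (n - 1) * x + x" for x using n' by simp
  have bound: "card L \<le> (n - 1) * K + 1"
  proof -
    have "card L \<le> (n - 1) * card S + 1" using c1 nS[of "card S"] by linarith
    also have "\<dots> \<le> (n - 1) * K + 1" using SK by simp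
    finally show ?thesis .
  qed
  have Lne: "L \<noteq> {}"
  proof -
    obtain f where "f \<in> I" "f \<noteq> 0" using assms(3) I0 by blast
    then obtain g where "g \<in> G" using gbl by blast
    then show ?thesis unfolding L_def by blast
  qed
  show ?thesis
  proof (intro conjI iffI)
    show "card G \<le> (n - 1) * K + 1" using cG bound by simp
  next
    assume eq: "card G = (n - 1) * K + 1"
    show "K = 1 \<or> n = 1"
    proof (rule ccontr)
      assume "\<not> (K = 1 \<or> n = 1)"
      then have K2: "K \<ge> 2" and n2: "n \<ge> 2" using SK cS1 assms(1) by auto
      show False
      proof (cases "card S \<ge> 2")
        case True
        have "card L \<le> (n - 1) * card S" using c2[OF n2 True] nS[of "card S"] by linarith
        also have "\<dots> \<le> (n - 1) * K" using SK by simp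
        finally show False using eq cG by simp
      next
        case False
        then have "card S = 1" using cS1 by simp
        then have "card L \<le> n" using c1 by simp
        moreover have "(n - 1) * 2 \<le> (n - 1) * K" using K2 by simp
        ultimately show False using eq cG n2 by linarith
      qed
    qed
  next
    assume "K = 1 \<or> n = 1"
    then show "card G = (n - 1) * K + 1"
    proof
      assume n1: "n = 1"
      have "card L \<ge> 1" using Lne finL card_gt_0_iff[of L] by auto
      then show ?thesis using bound n1 cG by simp
    next
      assume K1: "K = 1"
      have Sz: "s = 0" if "s \<in> S" for s
      proof (rule ccontr)
        assume "s \<noteq> 0"
        then have "card {0, s} = 2" by simp
        moreover have "card {0, s} \<le> card S" using that S0 finS by (intro card_mono) auto
        ultimately show False using SK K1 by simp
      qed
      have eeL: "ee i \<in> L" if i: "i < n" for i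
      proof -
        have "ee i \<noteq> 0" using ks_ee[of i] by (metis keys_eq_empty insert_not_empty)
        then have "ee i \<notin> S" using Sz by blast
        moreover have "ks (ee i) \<subseteq> {..<n}" using i by simp
        ultimately obtain l where l: "l \<in> L" "mon_dvd l (ee i)" unfolding S_def by blast
        have l0: "l \<noteq> 0" using l(1) lm0 unfolding L_def by auto
        have "l = ee i"
        proof (rule poly_mapping_eqI)
          fix k
          have le: "lk l k \<le> lk (ee i) k" using l(2) unfolding mon_dvd_def by blast
          show "lk l k = lk (ee i) k"
          proof (cases "k = i")
            case True
            have "lk l i \<noteq> 0"
            proof
              assume li: "lk l i = 0"
              have "l = 0"
              proof (rule poly_mapping_eqI)
                fix k'
                show "lk l k' = lk 0 k'"
                  using li l(2) unfolding mon_dvd_def by (cases "k' = i") (auto simp: lk_ee dest: spec[of _ k'])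
              qed
              then show False using l0 by simp
            qed
            then show ?thesis using le True by (simp add: lk_ee)
          next
            case False
            then show ?thesis using le by (simp add: lk_ee)
          qed
        qed
        then show ?thesis using l(1) by simp
      qed
      have injee: "inj_on ee {..<n}"
        by (rule inj_onI) (metis lk_ee one_neq_zero)
      have "n \<le> card L"
        using card_inj_on_le[OF injee _ finL] eeL by auto
      then show ?thesis using bound K1 cG assms(1) by simp
    qed
  qed
qed

end
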